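(* Let $\mathcal{X}$ be a finite set and $\underline{Q}$ a lower transition rate operator on $\mathcal{L}(\mathcal{X})$. Let $f\in\mathcal{L}(\mathcal{X})$ and $x\in\mathcal{X}$ be such that $f(x)>\min f$. Then $\underline{T}_tf(x)>\min f$ for all $t\ge0$.
   Context: $\mathcal{L}(\mathcal{X})$ is the set of real-valued functions on $\mathcal{X}$ with pointwise operations and order, real constants identified with constant functions, $\mathbb{I}_y$ the indicator of $\{y\}$. A lower transition rate operator is a map $\underline{Q}\colon\mathcal{L}(\mathcal{X})\to\mathcal{L}(\mathcal{X})$ such that for all $f,g$, $\lambda\ge0$, $\mu\in\mathbb{R}$, $x,y\in\mathcal{X}$: $\underline{Q}(\mu)=0$; $\underline{Q}(f+g)\ge\underline{Q}f+\underline{Q}g$; $\underline{Q}(\lambda f)=\lambda\underline{Q}f$; $x\ne y\Rightarrow\underline{Q}(\mathbb{I}_y)(x)\ge0$. For each $f$, $t\mapsto\underline{T}_tf$ is the unique solution on $[0,\infty)$ of $\frac{d}{dt}\underline{T}_tf=\underline{Q}\,\underline{T}_tf$ with $\underline{T}_0f=f$ (existence and uniqueness are known). *)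

theory Defs
  imports "HOL-Analysis.Analysis"
begin

definition lower_rate_op :: "(('x::finite \<Rightarrow> real) \<Rightarrow> ('x \<Rightarrow> real)) \<Rightarrow> bool" where
  "lower_rate_op Q \<longleftrightarrow>
     (\<forall>\<mu>::real. Q (\<lambda>_. \<mu>) = (\<lambda>_. 0)) \<and>
     (\<forall>f g x. Q (\<lambda>y. f y + g y) x \<ge> Q f x + Q g x) \<and>
     (\<forall>(l::real) f x. l \<ge> 0 \<longrightarrow> Q (\<lambda>y. l * f y) x = l * Q f x) \<and>
     (\<forall>x y. x \<noteq> y \<longrightarrow> Q (indicator {y}) x \<ge> 0)"

definition is_lower_semigroup_sol ::
  "(('x::finite \<Rightarrow> real) \<Rightarrow> ('x \<Rightarrow> real)) \<Rightarrow> ('x \<Rightarrow> real) \<Rightarrow> (real \<Rightarrow> 'x \<Rightarrow> real) \<Rightarrow> bool" where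
  "is_lower_semigroup_sol Q f T \<longleftrightarrow>
     T 0 = f \<and>
     (\<forall>t\<ge>0. \<forall>x. ((\<lambda>s. T s x) has_real_derivative Q (T t) x) (at t within {0..}))"

end

theory Submission
  imports Defs
begin

lemma Q_sum:
  assumes Q: "lower_rate_op Q" and fin: "finite A" and that: "\<forall>y. h y \<ge> 0"
  shows "Q (\<lambda>z. \<Sum>y\<in>A. h y * indicator {y} z) x \<ge> (\<Sum>y\<in>A. h y * Q (indicator {y}) x)"
  using fin
proof (induction A rule: finite_induct)
  case empty
  have "Q (\<lambda>_. 0) = (\<lambda>_. 0)" using Q unfolding lower_rate_op_def by blast
  then show ?case by simp
next
  case (insert a A)
  have sup: "Q (\<lambda>z. h a * indicator {a} z + (\<Sum>y\<in>A. h y * indicator {y} z)) x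
     \<ge> Q (\<lambda>z. h a * indicator {a} z) x + Q (\<lambda>z. \<Sum>y\<in>A. h y * indicator {y} z) x"
    using Q unfolding lower_rate_op_def by blast
  have hom: "Q (\<lambda>z. h a * indicator {a} z) x = h a * Q (indicator {a}) x"
    using Q that unfolding lower_rate_op_def by blast
  have eq: "(\<lambda>z. \<Sum>y\<in>insert a A. h y * indicator {y} z)
      = (\<lambda>z. h a * indicator {a} z + (\<Sum>y\<in>A. h y * indicator {y} z))"
    by (rule ext, rule sum.insert[OF insert(1,2)])
  have eq2: "(\<Sum>y\<in>insert a A. h y * Q (indicator {y}) x) = h a * Q (indicator {a}) x + (\<Sum>y\<in>A. h y * Q (indicator {y}) x)"
    by (rule sum.insert[OF insert(1,2)])
  show ?case unfolding eq eq2 using sup hom insert.IH by linarith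
qed

lemma Q_low:
  fixes Q :: "('x::finite \<Rightarrow> real) \<Rightarrow> ('x \<Rightarrow> real)"
  assumes Q: "lower_rate_op Q" and ge: "\<forall>z. g z \<ge> m"
  shows "Q g x \<ge> Q (indicator {x}) x * (g x - m)"
proof -
  define h where "h z = g z - m" for z
  have hnn: "\<forall>y. h y \<ge> 0" using ge by (simp add: h_def)
  have rep: "(\<lambda>z. \<Sum>y\<in>UNIV. h y * indicator {y} z) = h"
  proof
    fix z
    have "(\<Sum>y\<in>UNIV. h y * indicator {y} z) = (\<Sum>y\<in>UNIV. if y = z then h y else 0)"
      by (rule sum.cong) (auto simp: indicator_def)
    also have "\<dots> = h z" by simp
    finally show "(\<Sum>y\<in>UNIV. h y * indicator {y} z) = h z" .
  qed
  have g_eq: "g = (\<lambda>z. m + h z)" by (auto simp: h_def)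
  have "Q g x \<ge> Q (\<lambda>_. m) x + Q h x"
    using Q unfolding lower_rate_op_def g_eq by blast
  moreover have "Q (\<lambda>_. m) x = 0" using Q unfolding lower_rate_op_def by metis
  moreover have "Q h x \<ge> (\<Sum>y\<in>UNIV. h y * Q (indicator {y}) x)"
    using Q_sum[OF Q, of UNIV h x] hnn rep by simp
  moreover have "(\<Sum>y\<in>UNIV. h y * Q (indicator {y}) x) \<ge> h x * Q (indicator {x}) x"
  proof -
    have "(\<Sum>y\<in>UNIV. h y * Q (indicator {y}) x) = h x * Q (indicator {x}) x
        + (\<Sum>y\<in>UNIV - {x}. h y * Q (indicator {y}) x)"
      by (simp add: sum.remove)
    moreover have "(\<Sum>y\<in>UNIV - {x}. h y * Q (indicator {y}) x) \<ge> 0"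
    proof (rule sum_nonneg)
      fix y assume "y \<in> UNIV - {x}"
      then have "Q (indicator {y}) x \<ge> 0" using Q unfolding lower_rate_op_def by auto
      then show "h y * Q (indicator {y}) x \<ge> 0" using hnn by simp
    qed
    ultimately show ?thesis by linarith
  qed
  ultimately show ?thesis by (simp add: h_def mult.commute)
qed

lemma Q_min:
  fixes Q :: "('x::finite \<Rightarrow> real) \<Rightarrow> ('x \<Rightarrow> real)"
  assumes Q: "lower_rate_op Q" and ge: "\<forall>z. g z \<ge> g y"
  shows "Q g y \<ge> 0"
  using Q_low[OF Q ge, of y] by simp

lemma T_cont:
  assumes sol: "is_lower_semigroup_sol Q f T"
  shows "continuous_on {0..} (\<lambda>t. T t z)"
  using sol unfolding is_lower_semigroup_sol_def
  by (intro DERIV_continuous_on) auto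

lemma T_eps:
  fixes Q :: "('x::finite \<Rightarrow> real) \<Rightarrow> ('x \<Rightarrow> real)"
  assumes Q: "lower_rate_op Q" and sol: "is_lower_semigroup_sol Q f T"
    and fm: "\<forall>y. f y \<ge> m" and eps: "\<epsilon> > 0"
  shows "\<forall>t\<ge>0. \<forall>y. T t y - m + \<epsilon> * (1 + t) > 0"
proof (rule ccontr)
  define h where "h y t = T t y - m + \<epsilon> * (1 + t)" for y t
  assume "\<not> ?thesis"
  then obtain t1 y1 where t1: "t1 \<ge> 0" "h y1 t1 \<le> 0" unfolding h_def using not_less by blast
  have T0: "T 0 = f" using sol unfolding is_lower_semigroup_sol_def by blast
  have h0: "h z 0 > 0" for z using fm eps T0 by (simp add: h_def) (smt (verit))
  have hc: "continuous_on {0..t1} (h z)" for z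
  proof -
    have "continuous_on {0..t1} (\<lambda>t. T t z)"
      using T_cont[OF sol, of z] by (rule continuous_on_subset) auto
    then show ?thesis unfolding h_def by (intro continuous_intros)
  qed
  define S where "S = (\<Union>y. {0..t1} \<inter> h y -` {..0})"
  have Sclosed: "closed S" unfolding S_def
    by (intro closed_UN, simp, intro ballI continuous_closed_preimage[OF hc]) auto
  have y1S: "t1 \<in> S" using t1 by (auto simp: S_def)
  have bdd: "bdd_below S" unfolding S_def by (rule bdd_belowI[of _ 0]) auto
  define s where "s = Inf S"
  have sS: "s \<in> S" unfolding s_def using closed_contains_Inf[OF _ bdd Sclosed] y1S by blast
  have slow: "s \<le> t" if "t \<in> S" for t unfolding s_def using cInf_lower[OF that bdd] .
  obtain y where y: "h y s \<le> 0" "0 \<le> s" "s \<le> t1" using sS by (auto simp: S_def)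
  have spos: "s > 0" using y h0[of y] by (cases "s = 0") auto
  have hs: "h z s \<ge> 0" for z
  proof (rule ccontr)
    assume neg: "\<not> h z s \<ge> 0"
    have "continuous_on {0..s} (\<lambda>t. - h z t)"
      using hc[of z] y by (intro continuous_intros) (auto intro: continuous_on_subset)
    then obtain t where t: "0 \<le> t" "t \<le> s" "- h z t = 0"
      using IVT'[of "\<lambda>t. - h z t" 0 0 s] neg h0[of z] y by force
    then have "t \<in> S" using y unfolding S_def by (simp, metis order.refl order_trans)
    then have "s \<le> t" by (rule slow)
    then show False using t neg by auto
  qed
  have hy0: "h y s = 0" using hs[of y] y by linarith
  have minT: "\<forall>z. T s z \<ge> T s y"
  proof
    fix z
    have "h y s \<le> h z s" using hs[of z] hy0 by linarith
    then show "T s z \<ge> T s y" unfolding h_def by linarith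
  qed
  have Qnn: "Q (T s) y \<ge> 0" by (rule Q_min[OF Q minT])
  have "((\<lambda>t. T t y) has_real_derivative Q (T s) y) (at s within {0..})"
    using sol y unfolding is_lower_semigroup_sol_def by blast
  moreover have "at s within {0..} = at s"
    using spos by (intro at_within_interior) auto
  ultimately have d1: "((\<lambda>t. T t y) has_real_derivative Q (T s) y) (at s)" by simp
  have dh: "(h y has_real_derivative Q (T s) y + \<epsilon>) (at s)"
    unfolding h_def[abs_def] using d1
    by (auto intro!: derivative_eq_intros)
  then obtain d where d: "d > 0" "\<forall>hh>0. hh < d \<longrightarrow> h y (s - hh) < h y s"
    using DERIV_pos_inc_left[OF dh] Qnn eps by auto
  define hh where "hh = min d s / 2"
  have hh: "hh > 0" "hh < d" "hh \<le> s" using d spos by (auto simp: hh_def)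
  then have "h y (s - hh) < 0" using d hy0 by auto
  then have "s - hh \<in> S" using hh y unfolding S_def by (simp, metis less_imp_le)
  then have "s \<le> s - hh" by (rule slow)
  then show False using hh by auto
qed

lemma T_ge:
  fixes Q :: "('x::finite \<Rightarrow> real) \<Rightarrow> ('x \<Rightarrow> real)"
  assumes Q: "lower_rate_op Q" and sol: "is_lower_semigroup_sol Q f T"
    and fm: "\<forall>y. f y \<ge> m" and t: "t \<ge> 0"
  shows "T t y \<ge> m"
proof (rule ccontr)
  assume "\<not> T t y \<ge> m"
  define e where "e = (m - T t y) / (2 * (1 + t))"
  have e: "e > 0" using t \<open>\<not> T t y \<ge> m\<close> by (auto simp: e_def)
  have "T t y - m + e * (1 + t) > 0" using T_eps[OF Q sol fm e] t by blast
  moreover have "e * (1 + t) = (m - T t y) / 2" using t by (simp add: e_def field_simps)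
  ultimately have "0 < (T t y - m) / 2" by (simp only:) argo
  then show False using \<open>\<not> T t y \<ge> m\<close> by (simp add: field_simps)
qed


theorem lemma5:
  fixes Q :: "('x::finite \<Rightarrow> real) \<Rightarrow> ('x \<Rightarrow> real)"
    and f :: "'x \<Rightarrow> real" and x :: 'x and T :: "real \<Rightarrow> 'x \<Rightarrow> real"
  assumes "lower_rate_op Q"
    and "is_lower_semigroup_sol Q f T"
    and "f x > Min (range f)"
  shows "\<forall>t\<ge>0. T t x > Min (range f)"
proof (intro allI impI)
  fix t :: real assume t: "t \<ge> 0"
  note Q = assms(1) and sol = assms(2)
  define m where "m = Min (range f)"
  have fm: "\<forall>y. f y \<ge> m" unfolding m_def by (auto intro: Min_le)
  have Tge: "\<And>s z. s \<ge> 0 \<Longrightarrow> T s z \<ge> m" using T_ge[OF Q sol fm] by blast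
  define c where "c = max 0 (- Q (indicator {x}) x)"
  have c0: "c \<ge> 0" by (simp add: c_def)
  define \<psi> where "\<psi> s = exp (c * s) * (T s x - m)" for s
  have T0: "T 0 = f" using sol unfolding is_lower_semigroup_sol_def by blast
  have "\<psi> 0 \<le> \<psi> t"
  proof (rule DERIV_nonneg_imp_increasing_open[OF t])
    show "continuous_on {0..t} \<psi>"
    proof -
      have "continuous_on {0..t} (\<lambda>s. T s x)"
        using T_cont[OF sol, of x] by (rule continuous_on_subset) auto
      then show ?thesis unfolding \<psi>_def by (intro continuous_intros)
    qed
  next
    fix s :: real assume s: "0 < s" "s < t"
    have "((\<lambda>r. T r x) has_real_derivative Q (T s) x) (at s within {0..})"
      using sol s unfolding is_lower_semigroup_sol_def by auto
    moreover have "at s within {0..} = at s"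
      using s by (intro at_within_interior) auto
    ultimately have d1: "((\<lambda>r. T r x) has_real_derivative Q (T s) x) (at s)" by simp
    have d: "(\<psi> has_real_derivative
        (c * exp (c * s) * (T s x - m) + exp (c * s) * Q (T s) x)) (at s)"
      unfolding \<psi>_def[abs_def] using d1
      by (auto intro!: derivative_eq_intros simp: algebra_simps)
    have low: "Q (T s) x \<ge> Q (indicator {x}) x * (T s x - m)"
      using Q_low[OF Q] Tge s by auto
    have pos: "T s x - m \<ge> 0" using Tge s by auto
    have "Q (indicator {x}) x * (T s x - m) \<ge> - c * (T s x - m)"
      using pos by (intro mult_right_mono) (auto simp: c_def)
    then have "c * (T s x - m) + Q (T s) x \<ge> 0" using low by linarith
    then have "exp (c * s) * (c * (T s x - m) + Q (T s) x) \<ge> 0" by simp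
    then have "c * exp (c * s) * (T s x - m) + exp (c * s) * Q (T s) x \<ge> 0"
      by (simp add: algebra_simps)
    then show "\<exists>y. (\<psi> has_real_derivative y) (at s) \<and> 0 \<le> y" using d by blast
  qed
  moreover have "\<psi> 0 > 0" using assms(3) T0 by (simp add: \<psi>_def m_def)
  ultimately have "\<psi> t > 0" by linarith
  then have "T t x - m > 0" unfolding \<psi>_def by (simp add: zero_less_mult_iff)
  then show "T t x > Min (range f)" by (simp add: m_def)
qed

end
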